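(* Let $S_X,S_Y$ be finite nonempty action sets, $\varphi:S_X\times S_Y\to\mathbb{R}$, $\lambda\in[0,1)$, and let $(\sigma_X^0,\sigma_X^* )$ be a reactive learning strategy for $X$ with reachable set $\mathcal{M}_X$. Suppose there exists $\psi:S_X\to\mathbb{R}$ such that, with $\Psi(\tau_X)=\mathbb{E}_{s_X\sim\tau_X}[\psi(s_X)]$, the generalized next-round correction condition $$\varphi(\tau_X,s_Y)=\Psi(\tau_X)-\lambda\Psi(\sigma_X^*[\tau_X,s_Y])-(1-\lambda)\Psi(\sigma_X^0)$$ holds for every $\tau_X\in\mathcal{M}_X$ and $s_Y\in S_Y$. Then $(\sigma_X^0,\sigma_X^* )$ is a $(\varphi,\lambda)$-autocratic strategy.
   Context: Two players $X,Y$ play a repeated game with finite action sets $S_X,S_Y$; $\Delta(S)$ denotes the probability distributions on $S$. $\varphi(\tau_X,s_Y)=\mathbb{E}_{s_X\sim\tau_X}[\varphi(s_X,s_Y)]$. Histories: $\mathcal{H}=\bigcup_{T\ge0}(S_X\times S_Y)^T$; behavioral strategies are maps $\sigma:\mathcal{H}\to\Delta(S)$; players independently draw actions each round from their strategies evaluated at the history of realized action pairs, with $\mathbb{E}_{\sigma_X,\sigma_Y}$ the expectation over the resulting play. A strategy $\sigma_X$ is $(\varphi,\lambda)$-autocratic if for every behavioral strategy $\sigma_Y$ of $Y$, $\mathbb{E}_{\sigma_X,\sigma_Y}\big[(1-\lambda)\sum_{t\ge0}\lambda^t\varphi(s_X^t,s_Y^t)\big]=0$. A reactive learning strategy $(\sigma_X^0,\sigma_X^*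 )$, $\sigma_X^0\in\Delta(S_X)$, $\sigma_X^*:\Delta(S_X)\times S_Y\to\Delta(S_X)$, plays $\tau_X^0=\sigma_X^0$ in round $0$ and $\tau_X^{t+1}=\sigma_X^*[\tau_X^t,s_Y^t]$ in round $t+1$, where $s_Y^t$ is $Y$'s realized action in round $t$. Its reachable set $\mathcal{M}_X$ is the smallest subset of $\Delta(S_X)$ containing $\sigma_X^0$ and closed under $\tau_X\mapsto\sigma_X^*[\tau_X,s_Y]$ for every $s_Y\in S_Y$. *)

theory Defs
  imports "HOL-Probability.Probability"
begin

type_synonym ('x,'y) history = "('x \<times> 'y) list"
type_synonym ('x,'y,'s) bstrategy = "('x,'y) history \<Rightarrow> 's pmf"

fun hist_pmf :: "('x,'y,'x) bstrategy \<Rightarrow> ('x,'y,'y) bstrategy \<Rightarrow> nat \<Rightarrow> ('x,'y) history pmf" where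
  "hist_pmf sX sY 0 = return_pmf []"
| "hist_pmf sX sY (Suc n) =
     bind_pmf (hist_pmf sX sY n) (\<lambda>h.
       bind_pmf (sX h) (\<lambda>a. bind_pmf (sY h) (\<lambda>b. return_pmf (h @ [(a,b)]))))"

definition round_payoff :: "('x \<Rightarrow> 'y \<Rightarrow> real) \<Rightarrow> ('x,'y,'x) bstrategy \<Rightarrow> ('x,'y,'y) bstrategy \<Rightarrow> nat \<Rightarrow> real" where
  "round_payoff phi sX sY t =
     measure_pmf.expectation (hist_pmf sX sY (Suc t)) (\<lambda>h. phi (fst (last h)) (snd (last h)))"

text \<open>Expected normalized discounted payoff
  E[(1-lambda) sum_t lambda^t phi(s_X^t,s_Y^t)], computed by linearity as the
  series of the per-round expectations (phi is bounded, lambda in [0,1)).\<close>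
definition disc_payoff :: "('x \<Rightarrow> 'y \<Rightarrow> real) \<Rightarrow> real \<Rightarrow> ('x,'y,'x) bstrategy \<Rightarrow> ('x,'y,'y) bstrategy \<Rightarrow> real" where
  "disc_payoff phi lam sX sY = (1 - lam) * (\<Sum>t. lam ^ t * round_payoff phi sX sY t)"

definition autocratic :: "('x \<Rightarrow> 'y \<Rightarrow> real) \<Rightarrow> real \<Rightarrow> ('x,'y,'x) bstrategy \<Rightarrow> bool" where
  "autocratic phi lam sX \<longleftrightarrow> (\<forall>sY. disc_payoff phi lam sX sY = 0)"

definition reactive :: "'x pmf \<Rightarrow> ('x pmf \<Rightarrow> 'y \<Rightarrow> 'x pmf) \<Rightarrow> ('x,'y,'x) bstrategy" where
  "reactive s0 sstar h = foldl (\<lambda>\<tau> p. sstar \<tau> (snd p)) s0 h"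

inductive_set reachable :: "'x pmf \<Rightarrow> ('x pmf \<Rightarrow> 'y \<Rightarrow> 'x pmf) \<Rightarrow> 'x pmf set"
  for s0 sstar where
  init: "s0 \<in> reachable s0 sstar"
| step: "\<tau> \<in> reachable s0 sstar \<Longrightarrow> sstar \<tau> y \<in> reachable s0 sstar"

definition mix_val :: "'x pmf \<Rightarrow> ('x \<Rightarrow> real) \<Rightarrow> real" where
  "mix_val \<tau> f = measure_pmf.expectation \<tau> f"

end

theory Submission imports Defs begin
lemma int_bind_pmf:
  fixes f :: "'b \<Rightarrow> real"
  assumes "\<And>x. \<bar>f x\<bar> \<le> B"
  shows "measure_pmf.expectation (bind_pmf M N) f = measure_pmf.expectation M (\<lambda>x. measure_pmf.expectation (N x) f)"
  unfolding measure_pmf_bind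
  apply (rule integral_bind[where K="count_space UNIV" and B=B and B'=1])
  using assms measurable_measure_pmf[of N] 
  by (auto simp: measure_pmf.emeasure_space_1 measure_pmf.finite_measure_axioms)

lemma int_finite:
  fixes f :: "'a::finite \<Rightarrow> real"
  shows "measure_pmf.expectation M f = (\<Sum>a\<in>UNIV. f a * pmf M a)"
  by (rule integral_measure_pmf_real) auto

lemma int_bound:
  fixes f :: "'b \<Rightarrow> real"
  assumes "\<And>x. \<bar>f x\<bar> \<le> B"
  shows "integrable (measure_pmf M) f"
  apply (rule measure_pmf.integrable_const_bound[where B=B])
  using assms by auto

lemma int_abs_le:
  fixes f :: "'b \<Rightarrow> real"
  assumes "\<And>x. \<bar>f x\<bar> \<le> B"
  shows "\<bar>measure_pmf.expectation M f\<bar> \<le> B"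
proof -
  have "\<bar>measure_pmf.expectation M f\<bar> \<le> measure_pmf.expectation M (\<lambda>x. \<bar>f x\<bar>)"
    by (rule integral_abs_bound)
  also have "\<dots> \<le> measure_pmf.expectation M (\<lambda>x. B)"
    by (rule integral_mono) (use assms int_bound[of "\<lambda>x. \<bar>f x\<bar>" B] in auto)
  finally show ?thesis by simp
qed

lemma reach_foldl: "\<tau> \<in> reachable s0 sstar \<Longrightarrow> foldl (\<lambda>\<tau> p. sstar \<tau> (snd p)) \<tau> h \<in> reachable s0 sstar"
  by (induction h arbitrary: \<tau>) (auto intro: reachable.step)

lemma fin_bound:
  fixes g :: "'a::finite \<Rightarrow> real"
  shows "\<bar>g x\<bar> \<le> Max (range (\<lambda>x. \<bar>g x\<bar>))"
  by (rule Max_ge) auto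

lemma reactive_snoc: "reactive s0 sstar (h @ [(a,b)]) = sstar (reactive s0 sstar h) b"
  by (simp add: reactive_def)

theorem proposition1:
  fixes phi :: "'x::finite \<Rightarrow> 'y::finite \<Rightarrow> real"
    and lam :: real
    and s0 :: "'x pmf"
    and sstar :: "'x pmf \<Rightarrow> 'y \<Rightarrow> 'x pmf"
  assumes "0 \<le> lam" and "lam < 1"
    and "\<exists>psi :: 'x \<Rightarrow> real. \<forall>\<tau> \<in> reachable s0 sstar. \<forall>y.
           mix_val \<tau> (\<lambda>x. phi x y) =
             mix_val \<tau> psi - lam * mix_val (sstar \<tau> y) psi - (1 - lam) * mix_val s0 psi"
  shows "autocratic phi lam (reactive s0 sstar)"
  unfolding autocratic_def
proof
  fix sY :: "('x,'y,'y) bstrategy"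
  obtain psi :: "'x \<Rightarrow> real" where hyp: "\<And>\<tau> y. \<tau> \<in> reachable s0 sstar \<Longrightarrow>
           mix_val \<tau> (\<lambda>x. phi x y) =
             mix_val \<tau> psi - lam * mix_val (sstar \<tau> y) psi - (1 - lam) * mix_val s0 psi"
    using assms(3) by blast
  define sX where "sX = reactive s0 sstar"
  define Psi where "Psi \<tau> = mix_val \<tau> psi" for \<tau>
  define c where "c = Psi s0"
  define H where "H t = hist_pmf sX sY t" for t
  define A where "A t = measure_pmf.expectation (H t) (\<lambda>h. Psi (sX h))" for t
  define R where "R h = measure_pmf.expectation (sY h) (\<lambda>b. Psi (sstar (sX h) b))" for h
  define P where "P = Max (range (\<lambda>x. \<bar>psi x\<bar>))"
  define Q where "Q = Max (range (\<lambda>p::'x\<times>'y. \<bar>phi (fst p) (snd p)\<bar>))"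
  have reach: "sX h \<in> reachable s0 sstar" for h
    unfolding sX_def reactive_def by (rule reach_foldl) (rule reachable.init)
  have Psib: "\<bar>Psi \<tau>\<bar> \<le> P" for \<tau>
    unfolding Psi_def mix_val_def P_def by (rule int_abs_le) (rule fin_bound)
  have Rb: "\<bar>R h\<bar> \<le> P" for h
    unfolding R_def by (rule int_abs_le) (rule Psib)
  have phib: "\<bar>phi a b\<bar> \<le> Q" for a b
    using fin_bound[of "\<lambda>p::'x\<times>'y. phi (fst p) (snd p)" "(a,b)"] by (simp add: Q_def)
  have Ab: "\<bar>A t\<bar> \<le> P" for t
    unfolding A_def by (rule int_abs_le) (rule Psib)
  have G: "hist_pmf sX sY (Suc t) = bind_pmf (H t) (\<lambda>h.
       bind_pmf (sX h) (\<lambda>a. bind_pmf (sY h) (\<lambda>b. return_pmf (h @ [(a,b)]))))" for t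
    by (simp add: H_def)
  have inner: "measure_pmf.expectation (sX h) (\<lambda>a. measure_pmf.expectation (sY h) (\<lambda>b. phi a b))
      = Psi (sX h) - lam * R h - (1 - lam) * c" for h
  proof -
    have "measure_pmf.expectation (sX h) (\<lambda>a. measure_pmf.expectation (sY h) (\<lambda>b. phi a b))
        = (\<Sum>a\<in>UNIV. (\<Sum>b\<in>UNIV. phi a b * pmf (sY h) b) * pmf (sX h) a)"
      by (simp add: int_finite)
    also have "\<dots> = (\<Sum>b\<in>UNIV. (\<Sum>a\<in>UNIV. phi a b * pmf (sX h) a) * pmf (sY h) b)"
    proof -
      have "(\<Sum>a\<in>UNIV. (\<Sum>b\<in>UNIV. phi a b * pmf (sY h) b) * pmf (sX h) a)
          = (\<Sum>a\<in>UNIV. \<Sum>b\<in>UNIV. phi a b * pmf (sY h) b * pmf (sX h) a)"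
        by (simp add: sum_distrib_right)
      also have "\<dots> = (\<Sum>b\<in>UNIV. \<Sum>a\<in>UNIV. phi a b * pmf (sY h) b * pmf (sX h) a)"
        by (rule sum.swap)
      also have "\<dots> = (\<Sum>b\<in>UNIV. (\<Sum>a\<in>UNIV. phi a b * pmf (sX h) a) * pmf (sY h) b)"
        by (rule sum.cong[OF refl]) (simp add: sum_distrib_left mult_ac)
      finally show ?thesis .
    qed
    also have "\<dots> = (\<Sum>b\<in>UNIV. (Psi (sX h) - lam * Psi (sstar (sX h) b) - (1 - lam) * c) * pmf (sY h) b)"
      using hyp[OF reach[of h]] by (simp add: mix_val_def int_finite Psi_def c_def)
    also have "\<dots> = Psi (sX h) * (\<Sum>b\<in>UNIV. pmf (sY h) b) - lam * (\<Sum>b\<in>UNIV. Psi (sstar (sX h) b) * pmf (sY h) b)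
         - (1 - lam) * c * (\<Sum>b\<in>UNIV. pmf (sY h) b)"
      by (simp add: algebra_simps sum_subtractf sum.distrib sum_distrib_left sum_distrib_right)
    also have "\<dots> = Psi (sX h) - lam * R h - (1 - lam) * c"
      by (simp add: sum_pmf_eq_1 R_def int_finite)
    finally show ?thesis .
  qed
  have rp: "round_payoff phi sX sY t = A t - lam * A (Suc t) - (1 - lam) * c" for t
  proof -
    have "round_payoff phi sX sY t = measure_pmf.expectation (H t) (\<lambda>h. Psi (sX h) - lam * R h - (1 - lam) * c)"
      unfolding round_payoff_def G
      apply (subst int_bind_pmf[where B=Q])
       apply (simp add: phib)
      apply (subst int_bind_pmf[where B=Q])
       apply (simp add: phib)
      apply (subst int_bind_pmf[where B=Q])
       apply (simp add: phib)
      apply (simp add: inner)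
      done
    also have "\<dots> = A t - lam * measure_pmf.expectation (H t) R - (1 - lam) * c"
    proof -
      have i1: "integrable (measure_pmf (H t)) (\<lambda>h. Psi (sX h))" by (rule int_bound[where B=P], rule Psib)
      have i2: "integrable (measure_pmf (H t)) R" by (rule int_bound[where B=P], rule Rb)
      have i3: "integrable (measure_pmf (H t)) (\<lambda>h. lam * R h)" using i2 by simp
      have "measure_pmf.expectation (H t) (\<lambda>h. Psi (sX h) - lam * R h - (1 - lam) * c)
          = measure_pmf.expectation (H t) (\<lambda>h. Psi (sX h) - lam * R h) - measure_pmf.expectation (H t) (\<lambda>h. (1 - lam) * c)"
        by (rule Bochner_Integration.integral_diff) (use i1 i3 in auto)
      also have "measure_pmf.expectation (H t) (\<lambda>h. Psi (sX h) - lam * R h)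
          = measure_pmf.expectation (H t) (\<lambda>h. Psi (sX h)) - measure_pmf.expectation (H t) (\<lambda>h. lam * R h)"
        by (rule Bochner_Integration.integral_diff) (use i1 i3 in auto)
      finally show ?thesis unfolding A_def by simp
    qed
    also have "measure_pmf.expectation (H t) R = A (Suc t)"
      unfolding A_def H_def G
      apply (subst int_bind_pmf[where B=P], rule Psib)
      apply (subst int_bind_pmf[where B=P], rule Psib)
      apply (subst int_bind_pmf[where B=P], rule Psib)
      apply (simp add: reactive_snoc sX_def R_def[abs_def] H_def)
      done
    finally show ?thesis .
  qed
  have A0: "A 0 = c" by (simp add: A_def H_def sX_def reactive_def c_def)
  have lim: "(\<lambda>n. lam ^ n * A n) \<longlonglongrightarrow> 0"
  proof (rule Lim_null_comparison[where g="\<lambda>n. lam ^ n * P"])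
    show "\<forall>\<^sub>F n in sequentially. norm (lam ^ n * A n) \<le> lam ^ n * P"
      using Ab assms(1) by (auto simp: abs_mult intro!: always_eventually mult_left_mono)
    show "(\<lambda>n. lam ^ n * P) \<longlonglongrightarrow> 0"
      using assms by (auto intro!: tendsto_mult_left_zero LIMSEQ_power_zero)
  qed
  have s1: "(\<lambda>n. lam ^ n * A n - lam ^ Suc n * A (Suc n)) sums (c - 0)"
    using telescope_sums'[OF lim] A0 by simp
  have s2: "(\<lambda>n. lam ^ n * ((1 - lam) * c)) sums (c)"
  proof -
    have "(\<lambda>n. lam ^ n) sums (1 / (1 - lam))" using assms by (intro geometric_sums) auto
    from sums_mult2[OF this, of "(1 - lam) * c"] show ?thesis using assms by simp
  qed
  have "(\<lambda>t. lam ^ t * round_payoff phi sX sY t) sums (c - 0 - c)"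
    using sums_diff[OF s1 s2] by (simp add: rp algebra_simps)
  then show "disc_payoff phi lam (reactive s0 sstar) sY = 0"
    unfolding disc_payoff_def sX_def[symmetric] by (simp add: sums_unique[symmetric])
qed

end
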